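(* Let $k,n$ be positive integers with $n\geq2$ and $k\leq\lfloor n/2\rfloor$, and let $Z=(z_{\ell,r,s})\in\mathbb{C}^{\{1,\dots,k\}\times\{1,\dots,n\}\times\{1,\dots,n\}}$. Define $$\mathrm{gnhaf}(Z)=\frac{(n-2k)!}{n!}\sum_{r}\prod_{\ell=1}^k z_{\ell,r(2\ell-1),r(2\ell)},$$ where the sum runs over all injective maps $r:\{1,\dots,2k\}\to\{1,\dots,n\}$. Then $$|\mathrm{gnhaf}(Z)|\leq\prod_{\ell=1}^k\Big(\frac{1}{n(n-1)}\sum_{(r,s)}\Big|\tfrac12(z_{\ell,r,s}+z_{\ell,s,r})\Big|^2\Big)^{1/2}\leq\prod_{\ell=1}^k\Big(\frac{1}{n(n-1)}\sum_{(r,s)}|z_{\ell,r,s}|^2\Big)^{1/2},$$ where the sums run over ordered pairs $(r,s)$ of distinct elements of $\{1,\dots,n\}$. *)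

theory Defs
  imports "HOL-Analysis.Analysis"
begin

text \<open>Injective maps from {1..m} to {1..n}, represented as functions nat => nat
  that are fixed to 0 outside {1..m} (so that the set is in bijection with the
  actual injective maps).\<close>
definition inj_maps :: "nat \<Rightarrow> nat \<Rightarrow> (nat \<Rightarrow> nat) set" where
  "inj_maps m n = {r. inj_on r {1..m} \<and> r ` {1..m} \<subseteq> {1..n} \<and> (\<forall>i. i \<notin> {1..m} \<longrightarrow> r i = 0)}"

definition gnhaf :: "nat \<Rightarrow> nat \<Rightarrow> (nat \<Rightarrow> nat \<Rightarrow> nat \<Rightarrow> complex) \<Rightarrow> complex" where
  "gnhaf k n Z = (of_nat (fact (n - 2*k)) / of_nat (fact n)) *
     (\<Sum>r\<in>inj_maps (2*k) n. \<Prod>l=1..k. Z l (r (2*l - 1)) (r (2*l)))"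

definition dpairs :: "nat \<Rightarrow> (nat \<times> nat) set" where
  "dpairs n = {(r, s). r \<in> {1..n} \<and> s \<in> {1..n} \<and> r \<noteq> s}"

end

theory Submission
  imports Defs "HOL-Library.FuncSet"
begin


lemma merge_ident:
  fixes s t B C b c :: real
  shows "(s^2+t^2)*((B^2+(1-s^2)*C^2)*(b^2+(1-t^2)*c^2)-(1-s^2-t^2)*C^2*c^2) - (s*B*c+t*b*C)^2
     = (1-s^2-t^2)*(t*B*c-s*b*C)^2+(s^2+t^2)*(s*t*C*c-B*b)^2"
  by (simp add: algebra_simps power2_eq_square)

lemma merge_lemma:
  fixes w b c :: "'i \<Rightarrow> real"
  assumes "finite J" "\<forall>l\<in>J. 0 \<le> w l" "sum w J \<le> 1" "\<forall>l\<in>J. 0 \<le> c l" "\<forall>l\<in>J. 0 \<le> b l"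
  shows "0 \<le> (\<Sum>l\<in>J. sqrt (w l) * b l * (\<Prod>l'\<in>J-{l}. c l'))
    \<and> (1 - sum w J) * (\<Prod>l\<in>J. c l)^2 \<le> (\<Prod>l\<in>J. b l^2 + (1 - w l) * c l^2)
    \<and> (\<Sum>l\<in>J. sqrt (w l) * b l * (\<Prod>l'\<in>J-{l}. c l'))^2
       \<le> sum w J * ((\<Prod>l\<in>J. b l^2 + (1 - w l) * c l^2) - (1 - sum w J) * (\<Prod>l\<in>J. c l)^2)"
  using assms
proof (induction J rule: finite_induct)
  case empty
  then show ?case by simp
next
  case (insert j J)
  define S where "S = (\<Sum>l\<in>J. sqrt (w l) * b l * (\<Prod>l'\<in>J-{l}. c l'))"
  define C where "C = (\<Prod>l\<in>J. c l)"
  define Pi where "Pi = (\<Prod>l\<in>J. b l^2 + (1 - w l) * c l^2)"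
  define x where "x = sum w J"
  define y where "y = w j"
  have x0: "0 \<le> x" unfolding x_def using insert by (simp add: sum_nonneg)
  have y0: "0 \<le> y" unfolding y_def using insert by simp
  have xy1: "x + y \<le> 1" using insert unfolding x_def y_def by simp
  have IH: "0 \<le> S" "(1 - x) * C^2 \<le> Pi" "S^2 \<le> x * (Pi - (1-x)*C^2)"
    using insert unfolding S_def C_def Pi_def x_def by (auto simp: sum_nonneg)
  have C0: "0 \<le> C" unfolding C_def using insert by (simp add: prod_nonneg)
  have cj: "0 \<le> c j" "0 \<le> b j" using insert by auto
  have S': "(\<Sum>l\<in>insert j J. sqrt (w l) * b l * (\<Prod>l'\<in>insert j J-{l}. c l')) = sqrt y * b j * C + c j * S"
  proof -
    have "(\<Sum>l\<in>insert j J. sqrt (w l) * b l * (\<Prod>l'\<in>insert j J-{l}. c l'))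
        = sqrt (w j) * b j * (\<Prod>l'\<in>insert j J-{j}. c l') + (\<Sum>l\<in>J. sqrt (w l) * b l * (\<Prod>l'\<in>insert j J-{l}. c l'))"
      using insert by simp
    also have "(\<Prod>l'\<in>insert j J-{j}. c l') = C" unfolding C_def using insert
      by (metis Diff_insert_absorb)
    also have "(\<Sum>l\<in>J. sqrt (w l) * b l * (\<Prod>l'\<in>insert j J-{l}. c l')) = c j * S"
    proof -
      have "\<And>l. l \<in> J \<Longrightarrow> (\<Prod>l'\<in>insert j J-{l}. c l') = c j * (\<Prod>l'\<in>J-{l}. c l')"
      proof -
        fix l assume "l \<in> J"
        then have "insert j J - {l} = insert j (J - {l})" using insert by auto
        then show "(\<Prod>l'\<in>insert j J-{l}. c l') = c j * (\<Prod>l'\<in>J-{l}. c l')"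
          using insert by simp
      qed
      then show ?thesis unfolding S_def by (simp add: sum_distrib_left mult_ac)
    qed
    finally show ?thesis unfolding y_def by simp
  qed
  have C': "(\<Prod>l\<in>insert j J. c l) = c j * C" unfolding C_def using insert by simp
  have Pi': "(\<Prod>l\<in>insert j J. b l^2 + (1 - w l) * c l^2) = (b j^2 + (1-y)*c j^2) * Pi"
    unfolding Pi_def y_def using insert by simp
  have W': "sum w (insert j J) = x + y" unfolding x_def y_def using insert by simp
  define D where "D = Pi - (1-x)*C^2"
  have D0: "0 \<le> D" using IH unfolding D_def by simp
  obtain B where B: "S = sqrt x * B" "B^2 \<le> D" "0 \<le> B"
  proof (cases "x = 0")
    case True
    then have "S = 0" using IH by simp
    then show ?thesis using that[of 0] True D0 by simp
  next
    case False
    then have xp: "0 < x" using x0 by simp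
    have "S = sqrt x * (S / sqrt x)" using xp by simp
    moreover have "(S / sqrt x)^2 \<le> D"
      using IH xp unfolding D_def by (simp add: power_divide divide_le_eq mult.commute)
    moreover have "0 \<le> S / sqrt x" using IH xp by simp
    ultimately show ?thesis using that by blast
  qed
  have s2: "(sqrt x)^2 = x" "(sqrt y)^2 = y" using x0 y0 by simp_all
  have key: "(sqrt y * b j * C + c j * S)^2 \<le> (x + y) * ((b j^2 + (1-y)*c j^2) * Pi - (1 - (x+y)) * (c j * C)^2)"
  proof -
    have Pi_eq: "Pi = D + (1-x)*C^2" unfolding D_def by simp
    have mono: "(x+y) * ((b j^2 + (1-y)*c j^2) * (B^2 + (1-x)*C^2) - (1 - (x+y)) * (c j * C)^2)
        \<le> (x + y) * ((b j^2 + (1-y)*c j^2) * Pi - (1 - (x+y)) * (c j * C)^2)"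
      unfolding Pi_eq
      apply (rule mult_left_mono)
      using B(2) xy1 y0 x0
      by (auto intro!: mult_left_mono add_nonneg_nonneg mult_nonneg_nonneg)
    have id: "(x+y) * ((b j^2 + (1-y)*c j^2) * (B^2 + (1-x)*C^2) - (1 - (x+y)) * (c j * C)^2)
        - (sqrt y * b j * C + c j * S)^2
       = (1-x-y)*(sqrt y*B*c j-sqrt x*b j*C)^2+(x+y)*(sqrt x* sqrt y*C*c j-B*b j)^2"
      using merge_ident[of "sqrt x" "sqrt y" B C "b j" "c j"] unfolding s2 B(1)
      by (simp add: algebra_simps power2_eq_square)
    have "0 \<le> (1-x-y)*(sqrt y*B*c j-sqrt x*b j*C)^2+(x+y)*(sqrt x* sqrt y*C*c j-B*b j)^2"
      using xy1 x0 y0 by (auto intro!: add_nonneg_nonneg mult_nonneg_nonneg)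
    then show ?thesis using id mono by linarith
  qed
  have Dnew: "(1 - (x+y)) * (c j * C)^2 \<le> (b j^2 + (1-y)*c j^2) * Pi"
  proof -
    have "(1 - (x+y)) * (c j * C)^2 \<le> ((1-y)*c j^2) * ((1-x)*C^2)"
    proof -
      have "((1-y)*c j^2) * ((1-x)*C^2) - (1 - (x+y)) * (c j * C)^2 = x*y*(c j*C)^2"
        by (simp add: algebra_simps power2_eq_square)
      moreover have "0 \<le> x*y*(c j*C)^2" using x0 y0 by simp
      ultimately show ?thesis by linarith
    qed
    also have "\<dots> \<le> (b j^2 + (1-y)*c j^2) * Pi"
      apply (rule mult_mono) using IH xy1 x0 y0 by auto
    finally show ?thesis .
  qed
  show ?case
    unfolding S' C' Pi' W'
    using key Dnew IH cj C0 y0 by (auto simp: mult_ac)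
qed



lemma sqrt_prod: "sqrt (\<Prod>l\<in>S. f l) = (\<Prod>l\<in>S. sqrt (f l))"
  by (induction S rule: infinite_finite_induct) (auto simp: real_sqrt_mult)

lemma sum_sq_le:
  fixes f :: "'a \<Rightarrow> real"
  shows "(\<Sum>i\<in>I. f i)^2 \<le> real (card I) * (\<Sum>i\<in>I. (f i)^2)"
proof -
  have "0 \<le> (\<Sum>i\<in>I. \<Sum>j\<in>I. (f i - f j)^2)" by (intro sum_nonneg) auto
  also have "\<dots> = (\<Sum>i\<in>I. \<Sum>j\<in>I. (f i)^2 + (f j)^2 - 2 * f i * f j)"
    by (simp add: power2_diff)
  also have "\<dots> = 2*(real (card I) * (\<Sum>i\<in>I. (f i)^2)) - 2*(\<Sum>i\<in>I. \<Sum>j\<in>I. f i * f j)"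
    by (simp add: sum.distrib sum_subtractf sum_distrib_left mult.assoc)
  also have "(\<Sum>i\<in>I. \<Sum>j\<in>I. f i * f j) = (\<Sum>i\<in>I. f i)^2"
    by (simp add: power2_eq_square sum_product)
  finally show ?thesis by simp
qed

lemma HL:
  fixes w b c :: "'i \<Rightarrow> real"
  assumes "finite J" "\<forall>l\<in>J. 0 \<le> w l" "sum w J \<le> 1" "\<forall>l\<in>J. 0 \<le> c l" "\<forall>l\<in>J. 0 \<le> b l"
  shows "(1 - sum w J) * (\<Prod>l\<in>J. c l) + (\<Sum>l\<in>J. sqrt (w l) * b l * (\<Prod>l'\<in>J-{l}. c l'))
     \<le> (\<Prod>l\<in>J. sqrt (b l^2 + (1 - w l) * c l^2))"
proof -
  define S where "S = (\<Sum>l\<in>J. sqrt (w l) * b l * (\<Prod>l'\<in>J-{l}. c l'))"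
  define C where "C = (\<Prod>l\<in>J. c l)"
  define Pi where "Pi = (\<Prod>l\<in>J. b l^2 + (1 - w l) * c l^2)"
  define q where "q = sum w J"
  define p where "p = 1 - q"
  have M: "0 \<le> S" "p * C^2 \<le> Pi" "S^2 \<le> q * (Pi - p * C^2)"
    using merge_lemma[OF assms] unfolding S_def C_def Pi_def p_def q_def by auto
  have q0: "0 \<le> q" unfolding q_def using assms by (simp add: sum_nonneg)
  have p0: "0 \<le> p" unfolding p_def q_def using assms by simp
  have C0: "0 \<le> C" unfolding C_def using assms by (simp add: prod_nonneg)
  have sq: "(p * C + S)^2 \<le> Pi"
  proof (cases "q = 0")
    case True
    then have "S = 0" using M by simp
    then show ?thesis using M True unfolding p_def by (simp add: power2_eq_square)
  next
    case False
    then have qp: "0 < q" using q0 by simp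
    have "q * (Pi - (p * C + S)^2) \<ge> p * (q * C - S)^2"
    proof -
      have "q * (Pi - (p * C + S)^2) = q*(Pi - p*C^2) + q*p*C^2*(1-p) - 2*q*p*C*S - q*S^2"
        by (simp add: algebra_simps power2_eq_square)
      also have "\<dots> \<ge> S^2 + q*p*C^2*q - 2*q*p*C*S - q*S^2"
        using M(3) unfolding p_def by simp
      also have "S^2 + q*p*C^2*q - 2*q*p*C*S - q*S^2 = p * (q * C - S)^2"
        unfolding p_def by (simp add: algebra_simps power2_eq_square)
      finally show ?thesis by simp
    qed
    moreover have "0 \<le> p * (q * C - S)^2" using p0 by simp
    ultimately have "0 \<le> q * (Pi - (p * C + S)^2)" by linarith
    then show ?thesis using qp by (simp add: zero_le_mult_iff)
  qed
  have "p * C + S \<le> sqrt Pi"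
    using real_le_rsqrt[OF sq] .
  then show ?thesis unfolding sqrt_prod[symmetric] Pi_def[symmetric] S_def[symmetric] C_def[symmetric]
    p_def q_def by simp
qed



definition Inj :: "nat set \<Rightarrow> nat set \<Rightarrow> (nat \<Rightarrow> nat) set" where
  "Inj P V = {r. inj_on r P \<and> r ` P \<subseteq> V \<and> (\<forall>i. i \<notin> P \<longrightarrow> r i = 0)}"

definition nrm :: "nat set \<Rightarrow> nat set \<Rightarrow> ((nat \<Rightarrow> nat) \<Rightarrow> real) \<Rightarrow> real" where
  "nrm Q V f = (\<Sum>r\<in>Inj Q V. (f r)^2) / real (card (Inj Q V))"

lemma finite_Inj: "finite P \<Longrightarrow> finite V \<Longrightarrow> finite (Inj P V)"
proof -
  assume a: "finite P" "finite V"
  have "Inj P V \<subseteq> {f. \<forall>x. (x \<in> P \<longrightarrow> f x \<in> V) \<and> (x \<notin> P \<longrightarrow> f x = 0)}"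
    unfolding Inj_def by auto
  then show ?thesis using finite_set_of_finite_funs[OF a] finite_subset by blast
qed

lemma card_Inj:
  assumes "finite P" "finite V"
  shows "card (Inj P V) = (\<Prod>i\<in>{0..<card P}. card V - i)"
proof -
  have bij: "bij_betw (\<lambda>r. restrict r P) (Inj P V) {f \<in> P \<rightarrow>\<^sub>E V. inj_on f P}"
  proof (rule bij_betwI[where g = "\<lambda>f i. if i \<in> P then f i else 0"])
    show "(\<lambda>r. restrict r P) \<in> Inj P V \<rightarrow> {f \<in> P \<rightarrow>\<^sub>E V. inj_on f P}"
      unfolding Inj_def by (auto simp: inj_on_def)
    show "(\<lambda>f i. if i \<in> P then f i else 0) \<in> {f \<in> P \<rightarrow>\<^sub>E V. inj_on f P} \<rightarrow> Inj P V"
      unfolding Inj_def by (auto simp: inj_on_def)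
    show "\<And>x. x \<in> Inj P V \<Longrightarrow> (\<lambda>i. if i \<in> P then restrict x P i else 0) = x"
      unfolding Inj_def by auto
    show "\<And>y. y \<in> {f \<in> P \<rightarrow>\<^sub>E V. inj_on f P} \<Longrightarrow> restrict (\<lambda>i. if i \<in> P then y i else 0) P = y"
      by (auto simp: restrict_def PiE_def extensional_def)
  qed
  have "card (Inj P V) = card {f \<in> P \<rightarrow>\<^sub>E V. inj_on f P}"
    using bij_betw_same_card[OF bij] .
  also have "\<dots> = (\<Prod>i\<in>{0..<card P}. card V - i)"
    using card_inj_on_subset_funcset[OF assms(1) assms(2) order_refl] by simp
  finally show ?thesis .
qed

lemma Inj_empty: "Inj {} V = {\<lambda>_. 0}"
  unfolding Inj_def by auto

lemma Inj_upd_mem: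
  assumes "r \<in> Inj (P - {p}) (V - {v})" "p \<in> P" "v \<in> V"
  shows "r(p := v) \<in> Inj P V"
  using assms unfolding Inj_def inj_on_def by (auto split: if_splits)

lemma D1:
  fixes g :: "(nat \<Rightarrow> nat) \<Rightarrow> 'b::comm_monoid_add"
  assumes fP: "finite P" and fV: "finite V" and v: "v \<in> V"
  shows "(\<Sum>r\<in>Inj P V. g r) = (\<Sum>p\<in>P. \<Sum>r\<in>Inj (P-{p}) (V-{v}). g (r(p:=v))) + (\<Sum>r\<in>Inj P (V-{v}). g r)"
proof -
  define A where "A p = (\<lambda>r. r(p:=v)) ` Inj (P-{p}) (V-{v})" for p
  have eq: "Inj P V = (\<Union>p\<in>P. A p) \<union> Inj P (V-{v})"
  proof
    show "Inj P V \<subseteq> (\<Union>p\<in>P. A p) \<union> Inj P (V-{v})"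
    proof
      fix r assume r: "r \<in> Inj P V"
      show "r \<in> (\<Union>p\<in>P. A p) \<union> Inj P (V-{v})"
      proof (cases "v \<in> r ` P")
        case True
        then obtain p where p: "p \<in> P" "r p = v" by auto
        have "r(p := 0) \<in> Inj (P-{p}) (V-{v})"
          using r p unfolding Inj_def inj_on_def by (auto split: if_splits)
        moreover have "r = (r(p:=0))(p := v)" using p by auto
        ultimately show ?thesis unfolding A_def using p by blast
      next
        case False
        then show ?thesis using r unfolding Inj_def by auto
      qed
    qed
    show "(\<Union>p\<in>P. A p) \<union> Inj P (V-{v}) \<subseteq> Inj P V"
    proof (intro Un_least UN_least)
      fix p assume "p \<in> P"
      then show "A p \<subseteq> Inj P V" unfolding A_def using Inj_upd_mem[OF _ _ v] by blast
    next
      show "Inj P (V-{v}) \<subseteq> Inj P V" unfolding Inj_def by auto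
    qed
  qed
  have fA: "finite (A p)" for p unfolding A_def using fP fV by (simp add: finite_Inj)
  have disj1: "(\<Union>p\<in>P. A p) \<inter> Inj P (V-{v}) = {}"
    unfolding A_def Inj_def by auto
  have disj2: "\<forall>p\<in>P. \<forall>q\<in>P. p \<noteq> q \<longrightarrow> A p \<inter> A q = {}"
  proof (intro ballI impI)
    fix p q assume pq: "p \<in> P" "q \<in> P" "p \<noteq> q"
    show "A p \<inter> A q = {}"
    proof (rule ccontr)
      assume "A p \<inter> A q \<noteq> {}"
      then obtain r1 r2 where r: "r1 \<in> Inj (P-{p}) (V-{v})" "r2 \<in> Inj (P-{q}) (V-{v})" "r1(p:=v) = r2(q:=v)"
        unfolding A_def by auto
      then have "r2 p = v" using pq by (metis fun_upd_same fun_upd_other)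
      moreover have "r2 p \<in> V - {v}" using r(2) pq unfolding Inj_def by auto
      ultimately show False by simp
    qed
  qed
  have inj: "inj_on (\<lambda>r. r(p:=v)) (Inj (P-{p}) (V-{v}))" for p
  proof (rule inj_onI)
    fix r1 r2 assume r: "r1 \<in> Inj (P-{p}) (V-{v})" "r2 \<in> Inj (P-{p}) (V-{v})" "r1(p:=v) = r2(p:=v)"
    have "r1 p = 0" "r2 p = 0" using r unfolding Inj_def by auto
    then show "r1 = r2" using r(3) by (metis fun_upd_triv fun_upd_upd)
  qed
  have "(\<Sum>r\<in>Inj P V. g r) = (\<Sum>r\<in>(\<Union>p\<in>P. A p). g r) + (\<Sum>r\<in>Inj P (V-{v}). g r)"
    unfolding eq by (rule sum.union_disjoint) (use fA fP fV disj1 in \<open>auto simp: finite_Inj\<close>)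
  also have "(\<Sum>r\<in>(\<Union>p\<in>P. A p). g r) = (\<Sum>p\<in>P. \<Sum>r\<in>A p. g r)"
    by (rule sum.UNION_disjoint) (use fP fA disj2 in auto)
  also have "\<dots> = (\<Sum>p\<in>P. \<Sum>r\<in>Inj (P-{p}) (V-{v}). g (r(p:=v)))"
    unfolding A_def by (rule sum.cong[OF refl]) (simp add: sum.reindex[OF inj])
  finally show ?thesis .
qed



definition cnt :: "nat \<Rightarrow> nat \<Rightarrow> nat" where
  "cnt q n = (\<Prod>i\<in>{0..<q}. n - i)"

lemma cnt_Suc: "cnt (Suc q) n = n * cnt q (n - 1)"
  unfolding cnt_def by (simp add: prod.atLeast0_lessThan_Suc_shift del: prod.op_ivl_Suc)

lemma cnt_Suc2: "cnt (Suc q) m = cnt q m * (m - q)"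
  unfolding cnt_def by simp

lemma cnt_pos: "q \<le> n \<Longrightarrow> 0 < cnt q n"
  unfolding cnt_def by (auto intro!: prod_pos)

lemma card_Inj_cnt: "finite P \<Longrightarrow> finite V \<Longrightarrow> card (Inj P V) = cnt (card P) (card V)"
  unfolding cnt_def by (rule card_Inj)

lemma sum_nrm: "finite Q \<Longrightarrow> finite V \<Longrightarrow> (\<Sum>r\<in>Inj Q V. (f r)^2) = real (card (Inj Q V)) * nrm Q V f"
  unfolding nrm_def by (cases "card (Inj Q V) = 0") (auto simp: finite_Inj)

lemma nrm_nonneg: "0 \<le> nrm Q V f"
  unfolding nrm_def by (auto intro!: divide_nonneg_nonneg sum_nonneg)

lemma nrm_empty: "nrm {} V f = (f (\<lambda>_. 0))^2"
  unfolding nrm_def Inj_empty by simp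

lemma SND:
  assumes fQ: "finite Q" and fV: "finite V" and v: "v \<in> V" and le: "card Q \<le> card V"
  shows "real (card V) * nrm Q V f
     = (\<Sum>p\<in>Q. nrm (Q-{p}) (V-{v}) (\<lambda>r. f (r(p:=v)))) + real (card V - card Q) * nrm Q (V-{v}) f"
proof (cases "Q = {}")
  case True
  then show ?thesis by (simp add: nrm_empty)
next
  case False
  define n where "n = card V"
  obtain q where q: "card Q = Suc q" using False fQ by (metis card_0_eq not0_implies_Suc)
  have n0: "0 < n" unfolding n_def using v fV card_gt_0_iff by blast
  have cV: "card (V - {v}) = n - 1" unfolding n_def using v fV by simp
  have cQp: "card (Q - {p}) = q" if "p \<in> Q" for p using that q fQ by simp
  define c' where "c' = cnt q (n-1)"
  have c'pos: "0 < c'" unfolding c'_def using q le n_def by (intro cnt_pos) simp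
  have "(\<Sum>r\<in>Inj Q V. (f r)^2) = (\<Sum>p\<in>Q. \<Sum>r\<in>Inj (Q-{p}) (V-{v}). (f (r(p:=v)))^2) + (\<Sum>r\<in>Inj Q (V-{v}). (f r)^2)"
    by (rule D1[OF fQ fV v])
  also have "(\<Sum>p\<in>Q. \<Sum>r\<in>Inj (Q-{p}) (V-{v}). (f (r(p:=v)))^2) = (\<Sum>p\<in>Q. real c' * nrm (Q-{p}) (V-{v}) (\<lambda>r. f (r(p:=v))))"
  proof (rule sum.cong[OF refl])
    fix p assume p: "p \<in> Q"
    show "(\<Sum>r\<in>Inj (Q-{p}) (V-{v}). (f (r(p:=v)))^2) = real c' * nrm (Q-{p}) (V-{v}) (\<lambda>r. f (r(p:=v)))"
      using sum_nrm[of "Q-{p}" "V-{v}" "\<lambda>r. f (r(p:=v))"] fQ fV card_Inj_cnt[of "Q-{p}" "V-{v}"]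
        cQp[OF p] cV unfolding c'_def by simp
  qed
  also have "(\<Sum>r\<in>Inj Q (V-{v}). (f r)^2) = real c' * (real (n - card Q) * nrm Q (V-{v}) f)"
    using sum_nrm[of Q "V-{v}" f] fQ fV card_Inj_cnt[of Q "V-{v}"] cV q
    unfolding c'_def by (simp add: cnt_Suc2)
  finally have "(\<Sum>r\<in>Inj Q V. (f r)^2) = real c' * ((\<Sum>p\<in>Q. nrm (Q-{p}) (V-{v}) (\<lambda>r. f (r(p:=v)))) + real (n - card Q) * nrm Q (V-{v}) f)"
    by (simp only: sum_distrib_left distrib_left)
  moreover have "(\<Sum>r\<in>Inj Q V. (f r)^2) = real c' * (real n * nrm Q V f)"
    using sum_nrm[of Q V f] fQ fV card_Inj_cnt[of Q V] q n0
    unfolding c'_def n_def by (simp add: cnt_Suc)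
  ultimately show ?thesis using c'pos unfolding n_def by simp
qed



lemma Inj_nonempty_card:
  assumes "r \<in> Inj P V" "finite V"
  shows "card P \<le> card V"
proof -
  have "inj_on r P" "r ` P \<subseteq> V" using assms unfolding Inj_def by auto
  then show ?thesis using assms(2) by (metis card_image card_mono)
qed

lemma MT:
  fixes P :: "'i \<Rightarrow> nat set" and F :: "'i \<Rightarrow> (nat \<Rightarrow> nat) \<Rightarrow> real"
  assumes "finite V" "finite S" "\<forall>l\<in>S. finite (P l)" "disjoint_family_on P S"
    "card (\<Union>l\<in>S. P l) \<le> card V" "\<forall>l\<in>S. \<forall>r. 0 \<le> F l r"
    "\<forall>l\<in>S. \<forall>r r'. (\<forall>x\<in>P l. r x = r' x) \<longrightarrow> F l r = F l r'"
  shows "(\<Sum>r\<in>Inj (\<Union>l\<in>S. P l) V. \<Prod>l\<in>S. F l r)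
     \<le> real (card (Inj (\<Union>l\<in>S. P l) V)) * (\<Prod>l\<in>S. sqrt (nrm (P l) V (F l)))"
  using assms
proof (induction "card V" arbitrary: V P F rule: less_induct)
  case less
  note fV = less.prems(1) and fS = less.prems(2) and fP = less.prems(3) and disj = less.prems(4)
    and cardle = less.prems(5) and Fnn = less.prems(6) and Fdep = less.prems(7)
  define U where "U = (\<Union>l\<in>S. P l)"
  have fU: "finite U" unfolding U_def using fS fP by auto
  show ?case
  proof (cases "U = {}")
    case True
    then have Pe: "\<forall>l\<in>S. P l = {}" unfolding U_def by auto
    have "(\<Prod>l\<in>S. sqrt (nrm (P l) V (F l))) = (\<Prod>l\<in>S. F l (\<lambda>_. 0))"
      by (rule prod.cong[OF refl]) (simp add: Pe nrm_empty Fnn)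
    then show ?thesis using True unfolding U_def[symmetric] by (simp add: Inj_empty)
  next
    case False
    define n where "n = card V"
    define u where "u = card U"
    have u0: "0 < u" unfolding u_def using False fU by (simp add: card_gt_0_iff)
    have un: "u \<le> n" unfolding u_def n_def U_def using cardle by simp
    have n0: "0 < n" using u0 un by simp
    then obtain v where v: "v \<in> V" unfolding n_def by (metis card.empty ex_in_conv less_irrefl)
    have cV: "card (V - {v}) = n - 1" unfolding n_def using v fV by simp
    define K where "K l = nrm (P l) (V-{v}) (F l)" for l
    define M where "M l p = nrm (P l - {p}) (V-{v}) (\<lambda>r. F l (r(p:=v)))" for l p
    define N where "N l = nrm (P l) V (F l)" for l
    define g where "g r = (\<Prod>l\<in>S. F l r)" for r
    define c' where "c' = cnt (u-1) (n-1)"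
    have cardUV: "card (Inj U V) = n * c'"
    proof -
      have "card (Inj U V) = cnt u n" using card_Inj_cnt[OF fU fV] unfolding u_def n_def .
      also have "cnt u n = cnt (Suc (u-1)) n" using u0 by simp
      also have "\<dots> = n * c'" unfolding c'_def by (rule cnt_Suc)
      finally show ?thesis .
    qed
    have cardUVv: "card (Inj U (V-{v})) = c' * (n - u)"
    proof -
      have "card (Inj U (V-{v})) = cnt u (n-1)" using card_Inj_cnt[of U "V-{v}"] fU fV cV unfolding u_def by simp
      also have "cnt u (n-1) = cnt (Suc (u-1)) (n-1)" using u0 by simp
      also have "\<dots> = c' * (n - 1 - (u - 1))" unfolding c'_def by (rule cnt_Suc2)
      also have "n - 1 - (u - 1) = n - u" using u0 un by simp
      finally show ?thesis .
    qed
    have Kprod: "0 \<le> (\<Prod>l\<in>S. sqrt (K l))" by (simp add: prod_nonneg nrm_nonneg K_def)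
    have T2: "(\<Sum>r\<in>Inj U (V-{v}). g r) \<le> real (c' * (n - u)) * (\<Prod>l\<in>S. sqrt (K l))"
    proof (cases "Inj U (V-{v}) = {}")
      case True
      then show ?thesis using Kprod by simp
    next
      case False
      then obtain r where "r \<in> Inj U (V-{v})" by auto
      then have cle: "card U \<le> card (V-{v})" using Inj_nonempty_card fV by blast
      have "card (V-{v}) < card V" using cV n0 unfolding n_def by simp
      from less.hyps[OF this, of P F] have
        "(\<Sum>r\<in>Inj U (V-{v}). g r) \<le> real (card (Inj U (V-{v}))) * (\<Prod>l\<in>S. sqrt (nrm (P l) (V-{v}) (F l)))"
        using fV fS fP disj cle Fnn Fdep unfolding U_def g_def by auto
      then show ?thesis unfolding cardUVv K_def .
    qed
    have T1: "(\<Sum>r\<in>Inj (U-{p}) (V-{v}). g (r(p:=v))) \<le> real c' * (sqrt (M l p) * (\<Prod>l'\<in>S-{l}. sqrt (K l')))"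
      if lS: "l \<in> S" and pP: "p \<in> P l" for l p
    proof -
      define P' where "P' = P(l := P l - {p})"
      define F' where "F' = F(l := (\<lambda>r. F l (r(p:=v))))"
      have pnot: "p \<notin> P l'" if "l' \<in> S" "l' \<noteq> l" for l'
        using disj that lS pP unfolding disjoint_family_on_def by blast
      have U': "(\<Union>l'\<in>S. P' l') = U - {p}"
      proof
        show "(\<Union>l'\<in>S. P' l') \<subseteq> U - {p}" unfolding U_def P'_def using pnot by (auto split: if_splits)
        show "U - {p} \<subseteq> (\<Union>l'\<in>S. P' l')"
        proof
          fix x assume "x \<in> U - {p}"
          then obtain l' where "l' \<in> S" "x \<in> P l'" "x \<noteq> p" unfolding U_def by auto
          then show "x \<in> (\<Union>l'\<in>S. P' l')" unfolding P'_def by (cases "l' = l") auto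
        qed
      qed
      have gF: "g (r(p:=v)) = (\<Prod>l'\<in>S. F' l' r)" for r
        unfolding g_def
      proof (rule prod.cong[OF refl])
        fix l' assume l'S: "l' \<in> S"
        show "F l' (r(p:=v)) = F' l' r"
        proof (cases "l' = l")
          case True then show ?thesis unfolding F'_def by simp
        next
          case False
          then have "F l' (r(p:=v)) = F l' r" using Fdep l'S pnot[OF l'S False] by auto
          then show ?thesis unfolding F'_def using False by simp
        qed
      qed
      have lt: "card (V-{v}) < card V" using cV n0 unfolding n_def by simp
      have cle': "card (\<Union>l'\<in>S. P' l') \<le> card (V-{v})"
      proof -
        have "p \<in> U" unfolding U_def using pP lS by auto
        then have "card (U - {p}) = u - 1" unfolding u_def using fU by simp
        then show ?thesis unfolding U' cV using un by simp
      qed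
      have disj': "disjoint_family_on P' S"
        using disj unfolding disjoint_family_on_def P'_def by auto
      have fP': "\<forall>l'\<in>S. finite (P' l')" using fP unfolding P'_def by auto
      have Fnn': "\<forall>l'\<in>S. \<forall>r. 0 \<le> F' l' r" using Fnn unfolding F'_def by auto
      have Fdep': "\<forall>l'\<in>S. \<forall>r r'. (\<forall>x\<in>P' l'. r x = r' x) \<longrightarrow> F' l' r = F' l' r'"
      proof (intro ballI allI impI)
        fix l' and r r' :: "nat \<Rightarrow> nat" assume l'S: "l' \<in> S" and ag: "\<forall>x\<in>P' l'. r x = r' x"
        show "F' l' r = F' l' r'"
        proof (cases "l' = l")
          case True
          have "\<forall>x\<in>P l. (r(p:=v)) x = (r'(p:=v)) x" using ag True unfolding P'_def by auto
          then show ?thesis using Fdep lS True unfolding F'_def by auto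
        next
          case False
          then show ?thesis using Fdep l'S ag unfolding F'_def P'_def by auto
        qed
      qed
      from less.hyps[OF lt, of P' F', OF _ fS fP' disj' cle' Fnn' Fdep'] fV
      have IH: "(\<Sum>r\<in>Inj (U-{p}) (V-{v}). \<Prod>l'\<in>S. F' l' r)
          \<le> real (card (Inj (U-{p}) (V-{v}))) * (\<Prod>l'\<in>S. sqrt (nrm (P' l') (V-{v}) (F' l')))"
        unfolding U' by simp
      have cc: "card (Inj (U-{p}) (V-{v})) = c'"
      proof -
        have "p \<in> U" unfolding U_def using pP lS by auto
        then have "card (U - {p}) = u - 1" unfolding u_def using fU by simp
        then show ?thesis using card_Inj_cnt[of "U-{p}" "V-{v}"] fU fV cV unfolding c'_def by simp
      qed
      have pr: "(\<Prod>l'\<in>S. sqrt (nrm (P' l') (V-{v}) (F' l'))) = sqrt (M l p) * (\<Prod>l'\<in>S-{l}. sqrt (K l'))"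
      proof -
        have "(\<Prod>l'\<in>S. sqrt (nrm (P' l') (V-{v}) (F' l'))) = sqrt (nrm (P' l) (V-{v}) (F' l)) * (\<Prod>l'\<in>S-{l}. sqrt (nrm (P' l') (V-{v}) (F' l')))"
          using prod.remove[OF fS lS] .
        also have "(\<Prod>l'\<in>S-{l}. sqrt (nrm (P' l') (V-{v}) (F' l'))) = (\<Prod>l'\<in>S-{l}. sqrt (K l'))"
          unfolding K_def P'_def F'_def by (rule prod.cong) auto
        finally show ?thesis unfolding M_def P'_def F'_def by simp
      qed
      show ?thesis using IH unfolding gF[symmetric] cc pr .
    qed
    have "(\<Sum>r\<in>Inj U V. g r) = (\<Sum>p\<in>U. \<Sum>r\<in>Inj (U-{p}) (V-{v}). g (r(p:=v))) + (\<Sum>r\<in>Inj U (V-{v}). g r)"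
      by (rule D1[OF fU fV v])
    also have "(\<Sum>p\<in>U. \<Sum>r\<in>Inj (U-{p}) (V-{v}). g (r(p:=v))) = (\<Sum>l\<in>S. \<Sum>p\<in>P l. \<Sum>r\<in>Inj (U-{p}) (V-{v}). g (r(p:=v)))"
      unfolding U_def by (rule sum.UNION_disjoint) (use fS fP disj in \<open>auto simp: disjoint_family_on_def\<close>)
    also have "\<dots> \<le> (\<Sum>l\<in>S. \<Sum>p\<in>P l. real c' * (sqrt (M l p) * (\<Prod>l'\<in>S-{l}. sqrt (K l'))))"
      by (intro sum_mono T1) auto
    finally have main: "(\<Sum>r\<in>Inj U V. g r) \<le> real c' * ((\<Sum>l\<in>S. \<Sum>p\<in>P l. sqrt (M l p) * (\<Prod>l'\<in>S-{l}. sqrt (K l')))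
        + real (n - u) * (\<Prod>l\<in>S. sqrt (K l)))"
      using T2 by (simp add: sum_distrib_left distrib_left mult.assoc)
    define s where "s l = card (P l)" for l
    define Y where "Y l = (\<Sum>p\<in>P l. M l p)" for l
    have Mnn: "0 \<le> M l p" for l p unfolding M_def by (rule nrm_nonneg)
    have Ynn: "0 \<le> Y l" for l unfolding Y_def using Mnn by (simp add: sum_nonneg)
    have CS: "(\<Sum>p\<in>P l. sqrt (M l p)) \<le> sqrt (real (s l) * Y l)" for l
    proof -
      have "(\<Sum>p\<in>P l. sqrt (M l p))^2 \<le> real (s l) * (\<Sum>p\<in>P l. (sqrt (M l p))^2)"
        unfolding s_def by (rule sum_sq_le)
      also have "(\<Sum>p\<in>P l. (sqrt (M l p))^2) = Y l" unfolding Y_def using Mnn by simp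
      finally show ?thesis by (rule real_le_rsqrt)
    qed
    have A1: "(\<Sum>l\<in>S. \<Sum>p\<in>P l. sqrt (M l p) * (\<Prod>l'\<in>S-{l}. sqrt (K l')))
        \<le> (\<Sum>l\<in>S. sqrt (real (s l) * Y l) * (\<Prod>l'\<in>S-{l}. sqrt (K l')))"
    proof (rule sum_mono)
      fix l assume "l \<in> S"
      have "(\<Sum>p\<in>P l. sqrt (M l p) * (\<Prod>l'\<in>S-{l}. sqrt (K l'))) = (\<Sum>p\<in>P l. sqrt (M l p)) * (\<Prod>l'\<in>S-{l}. sqrt (K l'))"
        by (simp add: sum_distrib_right)
      also have "\<dots> \<le> sqrt (real (s l) * Y l) * (\<Prod>l'\<in>S-{l}. sqrt (K l'))"
        by (rule mult_right_mono[OF CS]) (simp add: prod_nonneg K_def nrm_nonneg)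
      finally show "(\<Sum>p\<in>P l. sqrt (M l p) * (\<Prod>l'\<in>S-{l}. sqrt (K l'))) \<le> sqrt (real (s l) * Y l) * (\<Prod>l'\<in>S-{l}. sqrt (K l'))" .
    qed
    define w where "w l = real (s l) / real n" for l
    have sumw: "sum w S = real u / real n"
    proof -
      have "u = (\<Sum>l\<in>S. s l)" unfolding u_def U_def s_def
        using card_UN_disjoint[OF fS] fP disj unfolding disjoint_family_on_def by auto
      then show ?thesis unfolding w_def by (simp add: sum_divide_distrib)
    qed
    have HLi: "(1 - sum w S) * (\<Prod>l\<in>S. sqrt (K l)) + (\<Sum>l\<in>S. sqrt (w l) * sqrt (Y l / real n) * (\<Prod>l'\<in>S-{l}. sqrt (K l')))
       \<le> (\<Prod>l\<in>S. sqrt ((sqrt (Y l / real n))^2 + (1 - w l) * (sqrt (K l))^2))"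
      using HL[OF fS, of w "\<lambda>l. sqrt (K l)" "\<lambda>l. sqrt (Y l / real n)"] sumw un n0
      by (auto simp: w_def K_def nrm_nonneg Ynn)
    have Neq: "(sqrt (Y l / real n))^2 + (1 - w l) * (sqrt (K l))^2 = N l" if lS: "l \<in> S" for l
    proof -
      have sl: "s l \<le> n"
      proof -
        have "P l \<subseteq> U" unfolding U_def using lS by auto
        then have "s l \<le> u" unfolding s_def u_def using fU by (simp add: card_mono)
        then show ?thesis using un by simp
      qed
      have "real n * N l = Y l + real (n - s l) * K l"
        using SND[of "P l" V v "F l"] fP lS fV v sl unfolding N_def Y_def M_def K_def s_def n_def by simp
      then show ?thesis using n0 Ynn[of l] sl unfolding w_def
        by (simp add: K_def nrm_nonneg field_simps of_nat_diff)
    qed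
    have lhs_eq: "(\<Sum>l\<in>S. sqrt (real (s l) * Y l) * (\<Prod>l'\<in>S-{l}. sqrt (K l'))) + real (n - u) * (\<Prod>l\<in>S. sqrt (K l))
        = real n * ((1 - sum w S) * (\<Prod>l\<in>S. sqrt (K l)) + (\<Sum>l\<in>S. sqrt (w l) * sqrt (Y l / real n) * (\<Prod>l'\<in>S-{l}. sqrt (K l'))))"
    proof -
      have e1: "sqrt (real (s l) * Y l) = real n * (sqrt (w l) * sqrt (Y l / real n))" for l
      proof -
        have "sqrt (w l) * sqrt (Y l / real n) = sqrt (real (s l) * Y l / (real n * real n))"
          unfolding w_def by (simp add: real_sqrt_mult[symmetric])
        also have "\<dots> = sqrt (real (s l) * Y l) / real n"
          using n0 by (simp add: real_sqrt_divide)
        finally show ?thesis using n0 by simp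
      qed
      show ?thesis unfolding sumw e1 using n0 un
        by (simp add: sum_distrib_left algebra_simps of_nat_diff)
    qed
    have prodN: "(\<Prod>l\<in>S. sqrt ((sqrt (Y l / real n))^2 + (1 - w l) * (sqrt (K l))^2)) = (\<Prod>l\<in>S. sqrt (N l))"
      by (rule prod.cong[OF refl]) (simp add: Neq)
    have final: "(\<Sum>l\<in>S. \<Sum>p\<in>P l. sqrt (M l p) * (\<Prod>l'\<in>S-{l}. sqrt (K l'))) + real (n - u) * (\<Prod>l\<in>S. sqrt (K l))
        \<le> real n * (\<Prod>l\<in>S. sqrt (N l))"
    proof -
      have "(\<Sum>l\<in>S. \<Sum>p\<in>P l. sqrt (M l p) * (\<Prod>l'\<in>S-{l}. sqrt (K l'))) + real (n - u) * (\<Prod>l\<in>S. sqrt (K l))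
          \<le> (\<Sum>l\<in>S. sqrt (real (s l) * Y l) * (\<Prod>l'\<in>S-{l}. sqrt (K l'))) + real (n - u) * (\<Prod>l\<in>S. sqrt (K l))"
        using A1 by (rule add_right_mono)
      also have "\<dots> = real n * ((1 - sum w S) * (\<Prod>l\<in>S. sqrt (K l)) + (\<Sum>l\<in>S. sqrt (w l) * sqrt (Y l / real n) * (\<Prod>l'\<in>S-{l}. sqrt (K l'))))"
        by (rule lhs_eq)
      also have "\<dots> \<le> real n * (\<Prod>l\<in>S. sqrt (N l))"
        using HLi unfolding prodN by (rule mult_left_mono) simp
      finally show ?thesis .
    qed
    have "(\<Sum>r\<in>Inj U V. g r) \<le> real c' * (real n * (\<Prod>l\<in>S. sqrt (N l)))"
      using main mult_left_mono[OF final, of "real c'"] by simp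
    then show ?thesis unfolding U_def[symmetric] g_def[symmetric] cardUV N_def by (simp add: mult_ac)
  qed
qed



lemma inj_maps_Inj: "inj_maps m n = Inj {1..m} {1..n}"
  unfolding inj_maps_def Inj_def by simp

definition swp :: "nat \<Rightarrow> (nat \<Rightarrow> nat) \<Rightarrow> (nat \<Rightarrow> nat)" where
  "swp j r = r(2*j-1 := r (2*j), 2*j := r (2*j-1))"

lemma swp_swp: "j \<ge> 1 \<Longrightarrow> swp j (swp j r) = r"
  unfolding swp_def by (rule ext) auto

lemma swp_mem:
  assumes "r \<in> Inj {1..m} V" "1 \<le> j" "2*j \<le> m"
  shows "swp j r \<in> Inj {1..m} V"
proof -
  have inj: "inj_on r {1..m}" and im: "r ` {1..m} \<subseteq> V" and out: "\<forall>i. i \<notin> {1..m} \<longrightarrow> r i = 0"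
    using assms(1) unfolding Inj_def by auto
  have "inj_on (swp j r) {1..m}"
  proof (rule inj_onI)
    fix x y assume xy: "x \<in> {1..m}" "y \<in> {1..m}" "swp j r x = swp j r y"
    define t where "t z = (if z = 2*j-1 then 2*j else if z = 2*j then 2*j-1 else z)" for z
    have st: "swp j r z = r (t z)" for z unfolding swp_def t_def using assms(2) by auto
    have tm: "t z \<in> {1..m}" if "z \<in> {1..m}" for z using that assms(2,3) unfolding t_def by auto
    have "r (t x) = r (t y)" using xy(3) unfolding st .
    then have "t x = t y" using inj_onD[OF inj _ tm[OF xy(1)] tm[OF xy(2)]] by blast
    then show "x = y" unfolding t_def using assms(2) by (auto split: if_splits)
  qed
  moreover have "swp j r ` {1..m} \<subseteq> V"
  proof -
    have "2*j-1 \<in> {1..m}" "2*j \<in> {1..m}" using assms(2,3) by auto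
    then have "r (2*j-1) \<in> V" "r (2*j) \<in> V" using im by auto
    then show ?thesis using im unfolding swp_def by auto
  qed
  moreover have "\<forall>i. i \<notin> {1..m} \<longrightarrow> swp j r i = 0" using out assms(2,3) unfolding swp_def by auto
  ultimately show ?thesis unfolding Inj_def by auto
qed

lemma sym_step:
  fixes Z :: "nat \<Rightarrow> nat \<Rightarrow> nat \<Rightarrow> complex" and Q :: "nat \<Rightarrow> nat \<Rightarrow> nat \<Rightarrow> complex"
  assumes j: "j \<in> {1..k}"
  shows "(\<Sum>r\<in>Inj {1..2*k} V. \<Prod>l=1..k. (Q(j := (\<lambda>a b. (Q j a b + Q j b a) / 2))) l (r (2*l-1)) (r (2*l)))
       = (\<Sum>r\<in>Inj {1..2*k} V. \<Prod>l=1..k. Q l (r (2*l-1)) (r (2*l)))"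
proof -
  define R where "R r = (\<Prod>l\<in>{1..k}-{j}. Q l (r (2*l-1)) (r (2*l)))" for r
  have fk: "finite {1..k}" by simp
  define Q' where "Q' = Q(j := (\<lambda>a b. (Q j a b + Q j b a) / 2))"
  have e1: "(\<Prod>l=1..k. Q' l (r (2*l-1)) (r (2*l)))
      = (Q j (r (2*j-1)) (r (2*j)) + Q j (r (2*j)) (r (2*j-1))) / 2 * R r" for r
  proof -
    have "(\<Prod>l=1..k. Q' l (r (2*l-1)) (r (2*l))) = Q' j (r (2*j-1)) (r (2*j)) * (\<Prod>l\<in>{1..k}-{j}. Q' l (r (2*l-1)) (r (2*l)))"
      by (rule prod.remove[OF fk j])
    also have "(\<Prod>l\<in>{1..k}-{j}. Q' l (r (2*l-1)) (r (2*l))) = R r"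
      unfolding R_def Q'_def by (rule prod.cong) auto
    finally show ?thesis unfolding Q'_def by simp
  qed
  have e2: "(\<Prod>l=1..k. Q l (r (2*l-1)) (r (2*l))) = Q j (r (2*j-1)) (r (2*j)) * R r" for r
    unfolding R_def by (rule prod.remove[OF fk j])
  have Rswp: "R (swp j r) = R r" for r
    unfolding R_def
  proof (rule prod.cong[OF refl])
    fix l assume "l \<in> {1..k} - {j}"
    then have "2*l-1 \<noteq> 2*j-1" "2*l-1 \<noteq> 2*j" "2*l \<noteq> 2*j-1" "2*l \<noteq> 2*j" using j by auto
    then show "Q l (swp j r (2*l-1)) (swp j r (2*l)) = Q l (r (2*l-1)) (r (2*l))"
      unfolding swp_def by simp
  qed
  have j1: "1 \<le> j" "2*j \<le> 2*k" using j by auto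
  have sw: "(\<Sum>r\<in>Inj {1..2*k} V. Q j (r (2*j)) (r (2*j-1)) * R r) = (\<Sum>r\<in>Inj {1..2*k} V. Q j (r (2*j-1)) (r (2*j)) * R r)"
  proof (rule sum.reindex_bij_witness[where i = "swp j" and j = "swp j"])
    show "\<And>a. a \<in> Inj {1..2*k} V \<Longrightarrow> swp j (swp j a) = a" using swp_swp j1 by blast
    show "\<And>a. a \<in> Inj {1..2*k} V \<Longrightarrow> swp j a \<in> Inj {1..2*k} V" using swp_mem j1 by blast
    show "\<And>a. a \<in> Inj {1..2*k} V \<Longrightarrow> swp j (swp j a) = a" using swp_swp j1 by blast
    show "\<And>a. a \<in> Inj {1..2*k} V \<Longrightarrow> swp j a \<in> Inj {1..2*k} V" using swp_mem j1 by blast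
    show "\<And>a. a \<in> Inj {1..2*k} V \<Longrightarrow> Q j (swp j a (2*j-1)) (swp j a (2*j)) * R (swp j a) = Q j (a (2*j)) (a (2*j-1)) * R a"
      using Rswp j1 unfolding swp_def by auto
  qed
  show ?thesis unfolding Q'_def[symmetric] e1 e2
    using sw by (simp add: sum.distrib add_divide_distrib distrib_right sum_divide_distrib[symmetric])
qed



lemma sym_all:
  fixes Z :: "nat \<Rightarrow> nat \<Rightarrow> nat \<Rightarrow> complex"
  assumes "finite T" "T \<subseteq> {1..k}"
  shows "(\<Sum>r\<in>Inj {1..2*k} V. \<Prod>l=1..k. (if l \<in> T then (\<lambda>a b. (Z l a b + Z l b a) / 2) else Z l) (r (2*l-1)) (r (2*l)))
       = (\<Sum>r\<in>Inj {1..2*k} V. \<Prod>l=1..k. Z l (r (2*l-1)) (r (2*l)))"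
  using assms
proof (induction T rule: finite_subset_induct)
  case empty
  then show ?case by simp
next
  case (insert j T)
  define Q where "Q = (\<lambda>l. if l \<in> T then (\<lambda>a b. (Z l a b + Z l b a) / 2) else Z l)"
  have eq: "(\<lambda>l. if l \<in> insert j T then (\<lambda>a b. (Z l a b + Z l b a) / 2) else Z l)
      = Q(j := (\<lambda>a b. (Q j a b + Q j b a) / 2))"
    unfolding Q_def using insert by (intro ext) auto
  have "(\<Sum>r\<in>Inj {1..2*k} V. \<Prod>l=1..k. (if l \<in> insert j T then (\<lambda>a b. (Z l a b + Z l b a) / 2) else Z l) (r (2*l-1)) (r (2*l)))
      = (\<Sum>r\<in>Inj {1..2*k} V. \<Prod>l=1..k. (Q(j := (\<lambda>a b. (Q j a b + Q j b a) / 2))) l (r (2*l-1)) (r (2*l)))"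
    by (intro sum.cong refl prod.cong) (simp only: eq[symmetric])
  also have "\<dots> = (\<Sum>r\<in>Inj {1..2*k} V. \<Prod>l=1..k. Q l (r (2*l-1)) (r (2*l)))"
    by (rule sym_step[of j k Q V]) (use insert in auto)
  also have "\<dots> = (\<Sum>r\<in>Inj {1..2*k} V. \<Prod>l=1..k. Z l (r (2*l-1)) (r (2*l)))"
    unfolding Q_def by (rule insert.IH)
  finally show ?case .
qed

lemma cnt_fact: "m \<le> n \<Longrightarrow> cnt m n * fact (n - m) = (fact n :: nat)"
proof (induction m)
  case 0
  then show ?case unfolding cnt_def by simp
next
  case (Suc m)
  have "fact (n - m) = (n - m) * (fact (n - Suc m) :: nat)"
  proof -
    have e: "n - m = Suc (n - Suc m)" using Suc.prems by simp
    show ?thesis unfolding e by (simp only: fact_Suc of_nat_id)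
  qed
  then show ?case using Suc by (simp add: cnt_Suc2 mult_ac)
qed

lemma pair_sum:
  fixes G :: "nat \<Rightarrow> nat \<Rightarrow> real"
  assumes ab: "a \<noteq> b"
  shows "(\<Sum>\<rho>\<in>Inj {a,b} {1..n}. G (\<rho> a) (\<rho> b)) = (\<Sum>(x,y)\<in>dpairs n. G x y)"
proof (rule sum.reindex_bij_witness[where i = "\<lambda>(x,y) t. if t = a then x else if t = b then y else 0"
      and j = "\<lambda>\<rho>. (\<rho> a, \<rho> b)"])
  fix \<rho> assume r: "\<rho> \<in> Inj {a,b} {1..n}"
  then have out: "\<forall>t. t \<notin> {a,b} \<longrightarrow> \<rho> t = 0" unfolding Inj_def by auto
  show "(case (\<rho> a, \<rho> b) of (x, y) \<Rightarrow> \<lambda>t. if t = a then x else if t = b then y else 0) = \<rho>"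
    using out by (auto intro!: ext)
  show "(\<rho> a, \<rho> b) \<in> dpairs n"
    using r ab unfolding Inj_def dpairs_def inj_on_def by auto
  show "(case (\<rho> a, \<rho> b) of (x, y) \<Rightarrow> G x y) = G (\<rho> a) (\<rho> b)" by simp
next
  fix xy assume xy: "xy \<in> dpairs n"
  obtain x y where xy': "xy = (x,y)" by (cases xy)
  show "((case xy of (x, y) \<Rightarrow> \<lambda>t. if t = a then x else if t = b then y else 0) a,
         (case xy of (x, y) \<Rightarrow> \<lambda>t. if t = a then x else if t = b then y else 0) b) = xy"
    using ab unfolding xy' by simp
  show "(case xy of (x, y) \<Rightarrow> \<lambda>t. if t = a then x else if t = b then y else 0) \<in> Inj {a, b} {1..n}"
    using xy ab unfolding xy' dpairs_def Inj_def inj_on_def by auto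
qed

lemma nrm_pair:
  fixes f :: "nat \<Rightarrow> nat \<Rightarrow> real"
  assumes ab: "a \<noteq> b" and n: "1 \<le> n"
  shows "nrm {a,b} {1..n} (\<lambda>\<rho>. f (\<rho> a) (\<rho> b)) = 1 / (real n * (real n - 1)) * (\<Sum>(x,y)\<in>dpairs n. (f x y)^2)"
proof -
  have c: "card (Inj {a,b} {1..n}) = n * (n - 1)"
    using card_Inj_cnt[of "{a,b}" "{1..n}"] ab unfolding cnt_def by (simp add: numeral_2_eq_2)
  have s: "(\<Sum>\<rho>\<in>Inj {a,b} {1..n}. (f (\<rho> a) (\<rho> b))^2) = (\<Sum>(x,y)\<in>dpairs n. (f x y)^2)"
    using pair_sum[OF ab, of "\<lambda>x y. (f x y)^2" n] by simp
  show ?thesis unfolding nrm_def s c using n by (simp add: of_nat_diff)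
qed

lemma UN_pairs: "(\<Union>l\<in>{1..k}. {2*l-1, 2*(l::nat)}) = {1..2*k}"
proof
  show "(\<Union>l\<in>{1..k}. {2*l-1, 2*l}) \<subseteq> {1..2*k}" by auto
  show "{1..2*k} \<subseteq> (\<Union>l\<in>{1..k}. {2*l-1, 2*l})"
  proof
    fix x assume x: "x \<in> {1..2*k}"
    define l where "l = (x + 1) div 2"
    have x1: "1 \<le> x" "x \<le> 2*k" using x by auto
    have "1 \<le> l" "l \<le> k" unfolding l_def using x1 by presburger+
    moreover have "x = 2*l-1 \<or> x = 2*l" unfolding l_def by presburger
    ultimately show "x \<in> (\<Union>l\<in>{1..k}. {2*l-1, 2*l})" by auto
  qed
qed

lemma disj_pairs: "disjoint_family_on (\<lambda>l::nat. {2*l-1, 2*l}) {1..k}"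
  unfolding disjoint_family_on_def
proof (intro ballI impI)
  fix m n :: nat assume "m \<in> {1..k}" "n \<in> {1..k}" "m \<noteq> n"
  then show "{2*m-1, 2*m} \<inter> {2*n-1, 2*n} = {}" by auto
qed



lemma sq_avg_le:
  fixes x y :: complex
  shows "(norm ((x + y) / 2))^2 \<le> ((norm x)^2 + (norm y)^2) / 2"
proof -
  have a: "norm ((x + y) / 2) \<le> (norm x + norm y) / 2"
    using norm_triangle_ineq[of x y] by (simp add: norm_divide)
  have "(norm ((x + y) / 2))^2 \<le> ((norm x + norm y) / 2)^2"
    using a by (intro power_mono) auto
  also have "\<dots> \<le> ((norm x)^2 + (norm y)^2) / 2"
    using sum_squares_bound[of "norm x" "norm y"]
    by (simp add: power2_eq_square field_simps)
  finally show ?thesis .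
qed

lemma dpairs_swap_sum:
  fixes g :: "nat \<Rightarrow> nat \<Rightarrow> real"
  shows "(\<Sum>(r, s)\<in>dpairs n. g s r) = (\<Sum>(r, s)\<in>dpairs n. g r s)"
proof (rule sum.reindex_bij_witness[where i = prod.swap and j = prod.swap])
  show "\<And>a. a \<in> dpairs n \<Longrightarrow> prod.swap (prod.swap a) = a" by simp
  show "\<And>a. a \<in> dpairs n \<Longrightarrow> prod.swap a \<in> dpairs n" unfolding dpairs_def by auto
  show "\<And>a. a \<in> dpairs n \<Longrightarrow> prod.swap (prod.swap a) = a" by simp
  show "\<And>a. a \<in> dpairs n \<Longrightarrow> prod.swap a \<in> dpairs n" unfolding dpairs_def by auto
  show "\<And>a. a \<in> dpairs n \<Longrightarrow> (case prod.swap a of (r, s) \<Rightarrow> g r s) = (case a of (r, s) \<Rightarrow> g s r)"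
    by auto
qed

lemma second_ineq_term:
  fixes a :: "nat \<Rightarrow> nat \<Rightarrow> complex"
  shows "(\<Sum>(r, s)\<in>dpairs n. (norm ((a r s + a s r) / 2))^2) \<le> (\<Sum>(r, s)\<in>dpairs n. (norm (a r s))^2)"
proof -
  have "(\<Sum>(r, s)\<in>dpairs n. (norm ((a r s + a s r) / 2))^2)
      \<le> (\<Sum>(r, s)\<in>dpairs n. ((norm (a r s))^2 + (norm (a s r))^2) / 2)"
  proof (rule sum_mono)
    fix x assume "x \<in> dpairs n"
    obtain r s where x: "x = (r, s)" by (cases x)
    show "(case x of (r, s) \<Rightarrow> (norm ((a r s + a s r) / 2))^2) \<le> (case x of (r, s) \<Rightarrow> ((norm (a r s))^2 + (norm (a s r))^2) / 2)"
      unfolding x using sq_avg_le[of "a r s" "a s r"] by simp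
  qed
  also have "\<dots> = ((\<Sum>(r, s)\<in>dpairs n. (norm (a r s))^2) + (\<Sum>(r, s)\<in>dpairs n. (norm (a s r))^2)) / 2"
    by (simp add: sum_divide_distrib[symmetric] sum.distrib case_prod_beta)
  also have "(\<Sum>(r, s)\<in>dpairs n. (norm (a s r))^2) = (\<Sum>(r, s)\<in>dpairs n. (norm (a r s))^2)"
    using dpairs_swap_sum[of "\<lambda>r s. (norm (a r s))^2" n] by simp
  finally show ?thesis by simp
qed

theorem mainTheorem7:
  fixes k n :: nat and Z :: "nat \<Rightarrow> nat \<Rightarrow> nat \<Rightarrow> complex"
  assumes "k \<ge> 1" and "n \<ge> 2" and "k \<le> n div 2"
  shows "norm (gnhaf k n Z)
           \<le> (\<Prod>l=1..k. sqrt (1 / (real n * (real n - 1)) *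
                 (\<Sum>(r, s)\<in>dpairs n. (norm ((Z l r s + Z l s r) / 2))\<^sup>2)))
         \<and> (\<Prod>l=1..k. sqrt (1 / (real n * (real n - 1)) *
                 (\<Sum>(r, s)\<in>dpairs n. (norm ((Z l r s + Z l s r) / 2))\<^sup>2)))
           \<le> (\<Prod>l=1..k. sqrt (1 / (real n * (real n - 1)) *
                 (\<Sum>(r, s)\<in>dpairs n. (norm (Z l r s))\<^sup>2)))"
proof
  define W where "W l a b = (Z l a b + Z l b a) / 2" for l a b
  define F :: "nat \<Rightarrow> (nat \<Rightarrow> nat) \<Rightarrow> real" where "F l r = norm (W l (r (2*l-1)) (r (2*l)))" for l r
  define P :: "nat \<Rightarrow> nat set" where "P l = {2*l-1, 2*l}" for l
  define c where "c = cnt (2*k) n"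
  define I where "I = Inj {1..2*k} {1..n}"
  have n2k: "2*k \<le> n" using assms(3) by linarith
  have cpos: "0 < c" unfolding c_def using n2k by (rule cnt_pos)
  have cardI: "card I = c" unfolding I_def c_def using card_Inj_cnt[of "{1..2*k}" "{1..n}"] by simp
  have fI: "finite I" unfolding I_def by (simp add: finite_Inj)
  have cf: "of_nat (fact (n - 2*k)) / of_nat (fact n) = (1 / of_nat c :: complex)"
  proof -
    have "c * fact (n - 2*k) = (fact n :: nat)" unfolding c_def using n2k by (rule cnt_fact)
    then have "(of_nat c :: complex) * of_nat (fact (n - 2*k)) = of_nat (fact n)"
      by (metis of_nat_mult)
    moreover have "(of_nat (fact n) :: complex) \<noteq> 0" by simp
    ultimately show ?thesis using cpos by (simp add: field_simps)
  qed
  have symm: "(\<Sum>r\<in>I. \<Prod>l=1..k. Z l (r (2*l-1)) (r (2*l))) = (\<Sum>r\<in>I. \<Prod>l=1..k. W l (r (2*l-1)) (r (2*l)))"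
  proof -
    have "(\<Sum>r\<in>I. \<Prod>l=1..k. W l (r (2*l-1)) (r (2*l)))
        = (\<Sum>r\<in>I. \<Prod>l=1..k. (if l \<in> {1..k} then (\<lambda>a b. (Z l a b + Z l b a) / 2) else Z l) (r (2*l-1)) (r (2*l)))"
      unfolding W_def by (intro sum.cong refl prod.cong) auto
    also have "\<dots> = (\<Sum>r\<in>I. \<Prod>l=1..k. Z l (r (2*l-1)) (r (2*l)))"
      unfolding I_def by (rule sym_all) auto
    finally show ?thesis by simp
  qed
  have gn: "gnhaf k n Z = (\<Sum>r\<in>I. \<Prod>l=1..k. W l (r (2*l-1)) (r (2*l))) / of_nat c"
    unfolding gnhaf_def inj_maps_Inj I_def[symmetric] cf symm by simp
  have h1: "norm (gnhaf k n Z) \<le> (\<Sum>r\<in>I. \<Prod>l\<in>{1..k}. F l r) / real c"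
  proof -
    have "norm (gnhaf k n Z) = norm (\<Sum>r\<in>I. \<Prod>l=1..k. W l (r (2*l-1)) (r (2*l))) / real c"
      unfolding gn by (simp add: norm_divide)
    also have "norm (\<Sum>r\<in>I. \<Prod>l=1..k. W l (r (2*l-1)) (r (2*l))) \<le> (\<Sum>r\<in>I. \<Prod>l\<in>{1..k}. F l r)"
      unfolding F_def by (rule order_trans[OF norm_sum]) (simp add: prod_norm)
    finally show ?thesis using cpos by (simp add: divide_right_mono)
  qed
  have UP: "(\<Union>l\<in>{1..k}. P l) = {1..2*k}" unfolding P_def by (rule UN_pairs)
  have mt: "(\<Sum>r\<in>I. \<Prod>l\<in>{1..k}. F l r) \<le> real c * (\<Prod>l\<in>{1..k}. sqrt (nrm (P l) {1..n} (F l)))"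
  proof -
    have "(\<Sum>r\<in>Inj (\<Union>l\<in>{1..k}. P l) {1..n}. \<Prod>l\<in>{1..k}. F l r)
        \<le> real (card (Inj (\<Union>l\<in>{1..k}. P l) {1..n})) * (\<Prod>l\<in>{1..k}. sqrt (nrm (P l) {1..n} (F l)))"
    proof (rule MT)
      show "disjoint_family_on P {1..k}" unfolding P_def by (rule disj_pairs)
      show "card (\<Union>l\<in>{1..k}. P l) \<le> card {1..n}" unfolding UP using n2k by simp
      show "\<forall>l\<in>{1..k}. \<forall>r r'. (\<forall>x\<in>P l. r x = r' x) \<longrightarrow> F l r = F l r'"
        unfolding P_def F_def by auto
    qed (auto simp: P_def F_def)
    then show ?thesis unfolding UP I_def[symmetric] cardI .
  qed
  have nrm_eq: "nrm (P l) {1..n} (F l) = 1 / (real n * (real n - 1)) *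
                 (\<Sum>(r, s)\<in>dpairs n. (norm ((Z l r s + Z l s r) / 2))\<^sup>2)" if "l \<in> {1..k}" for l
  proof -
    have "2*l-1 \<noteq> 2*l" using that by auto
    from nrm_pair[OF this, of n "\<lambda>x y. norm (W l x y)"] assms(2)
    show ?thesis unfolding P_def F_def W_def by simp
  qed
  show ineq1: "norm (gnhaf k n Z)
           \<le> (\<Prod>l=1..k. sqrt (1 / (real n * (real n - 1)) *
                 (\<Sum>(r, s)\<in>dpairs n. (norm ((Z l r s + Z l s r) / 2))\<^sup>2)))"
  proof -
    have "(\<Sum>r\<in>I. \<Prod>l\<in>{1..k}. F l r) / real c \<le> (\<Prod>l\<in>{1..k}. sqrt (nrm (P l) {1..n} (F l)))"
      using mt cpos by (simp add: divide_le_eq mult.commute)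
    also have "\<dots> = (\<Prod>l=1..k. sqrt (1 / (real n * (real n - 1)) *
                 (\<Sum>(r, s)\<in>dpairs n. (norm ((Z l r s + Z l s r) / 2))\<^sup>2)))"
    proof (rule prod.cong[OF refl])
      fix l assume "l \<in> {1..k}"
      from nrm_eq[OF this] show "sqrt (nrm (P l) {1..n} (F l)) = sqrt (1 / (real n * (real n - 1)) *
                 (\<Sum>(r, s)\<in>dpairs n. (norm ((Z l r s + Z l s r) / 2))\<^sup>2))" by (rule arg_cong)
    qed
    finally show ?thesis using h1 by linarith
  qed
  show "(\<Prod>l=1..k. sqrt (1 / (real n * (real n - 1)) *
                 (\<Sum>(r, s)\<in>dpairs n. (norm ((Z l r s + Z l s r) / 2))\<^sup>2)))
           \<le> (\<Prod>l=1..k. sqrt (1 / (real n * (real n - 1)) *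
                 (\<Sum>(r, s)\<in>dpairs n. (norm (Z l r s))\<^sup>2)))"
  proof (rule prod_mono, rule conjI)
    fix l assume "l \<in> {1..k}"
    have np: "0 \<le> 1 / (real n * (real n - 1))" using assms(2) by simp
    show "0 \<le> sqrt (1 / (real n * (real n - 1)) * (\<Sum>(r, s)\<in>dpairs n. (norm ((Z l r s + Z l s r) / 2))\<^sup>2))"
    proof -
      have "0 \<le> (\<Sum>(r, s)\<in>dpairs n. (norm ((Z l r s + Z l s r) / 2))\<^sup>2)" by (rule sum_nonneg) auto
      then show ?thesis by (intro real_sqrt_ge_zero mult_nonneg_nonneg np)
    qed
    show "sqrt (1 / (real n * (real n - 1)) * (\<Sum>(r, s)\<in>dpairs n. (norm ((Z l r s + Z l s r) / 2))\<^sup>2))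
        \<le> sqrt (1 / (real n * (real n - 1)) * (\<Sum>(r, s)\<in>dpairs n. (norm (Z l r s))\<^sup>2))"
      using second_ineq_term[where a = "Z l" and n = n] np by (intro real_sqrt_le_mono mult_left_mono) auto
  qed
qed


end
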